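(* Let $m,a,b,t\in\mathbb{N}$ with $m\geq 3$, $a\geq 1$, $t\in\{2,\ldots,m-1\}$ and $(t-1)(am+1)<bm+t<t(am+1)$, and let $S=\langle m,\ am+1,\ bm+t\rangle$ (a MANS-semigroup with embedding dimension $3$). Then \[ \mathrm{F}(S)=r(am+1)+q(bm+t)-m, \] where $q=\left\lfloor\frac{m-1}{t}\right\rfloor$ and $r=(m-1)\bmod t$.
   Context: $\mathbb{N}=\{0,1,2,\ldots\}$. $\langle A\rangle$ is the submonoid of $(\mathbb{N},+)$ generated by $A$; a numerical semigroup is a submonoid of $\mathbb{N}$ with finite complement. $\mathrm{F}(S)$, the Frobenius number, is the greatest integer not in $S$. A MANS-semigroup is a numerical semigroup with $w(1)<\cdots<w(\mathrm{m}(S)-1)$, where $\mathrm{m}(S)$ is the least element of $S\setminus\{0\}$ and $w(i)$ the least element of $S$ congruent to $i$ modulo $\mathrm{m}(S)$. $a\bmod b$ is the remainder of the division of $a$ by $b$. *)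

theory Defs
  imports Main
begin

inductive_set gen_monoid :: "nat set \<Rightarrow> nat set" for A :: "nat set" where
  zero: "0 \<in> gen_monoid A"
| add: "x \<in> gen_monoid A \<Longrightarrow> a \<in> A \<Longrightarrow> x + a \<in> gen_monoid A"

definition frobenius :: "nat set \<Rightarrow> int" where
  "frobenius S = (GREATEST z :: int. z \<notin> int ` S)"

end

theory Submission
  imports Defs
begin

lemma gm_mult: "x \<in> gen_monoid A \<Longrightarrow> c \<in> A \<Longrightarrow> x + k * c \<in> gen_monoid A"
proof (induction k)
  case 0 then show ?case by simp
next
  case (Suc k)
  then have "x + k * c + c \<in> gen_monoid A" using gen_monoid.add by blast
  then show ?case by (simp add: ac_simps)
qed

lemma gm_char: "x \<in> gen_monoid {m, n1, n2} \<Longrightarrow> \<exists>p y z. x = p*m + y*n1 + z*n2"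
proof (induction rule: gen_monoid.induct)
  case zero
  then show ?case by (intro exI[of _ 0]) simp
next
  case (add x c)
  then obtain p y z where "x = p*m + y*n1 + z*n2" by blast
  with add.hyps(2) show ?case
  proof auto
    show "\<exists>pa ya za. p * m + y * n1 + z * n2 + m = pa * m + ya * n1 + za * n2"
      by (rule exI[of _ "Suc p"], rule exI[of _ y], rule exI[of _ z]) simp
    show "\<exists>pa ya za. p * m + y * n1 + z * n2 + n1 = pa * m + ya * n1 + za * n2"
      by (rule exI[of _ p], rule exI[of _ "Suc y"], rule exI[of _ z]) simp
    show "\<exists>pa ya za. p * m + y * n1 + z * n2 + n2 = pa * m + ya * n1 + za * n2"
      by (rule exI[of _ p], rule exI[of _ y], rule exI[of _ "Suc z"]) simp
  qed
qed

lemma gm_mem: "p*m + y*n1 + z*n2 \<in> gen_monoid {m, n1, n2}"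
proof -
  have "0 + p*m \<in> gen_monoid {m, n1, n2}" by (rule gm_mult) (auto intro: gen_monoid.zero)
  then have "0 + p*m + y*n1 \<in> gen_monoid {m, n1, n2}" by (rule gm_mult) auto
  then have "0 + p*m + y*n1 + z*n2 \<in> gen_monoid {m, n1, n2}" by (rule gm_mult) auto
  then show ?thesis by simp
qed

definition W :: "nat \<Rightarrow> nat \<Rightarrow> nat \<Rightarrow> nat \<Rightarrow> nat" where
  "W t n1 n2 j = (j mod t) * n1 + (j div t) * n2"

lemma W_step:
  assumes "t \<ge> 1" "(t - 1) * n1 < n2"
  shows "W t n1 n2 j \<le> W t n1 n2 (Suc j)"
proof -
  obtain q r where j: "j = q*t + r" "r < t" using assms(1)
    by (metis div_mult_mod_eq mod_less_divisor less_le_trans zero_less_one)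
  show ?thesis
  proof (cases "Suc r < t")
    case True
    have e: "Suc j = q*t + Suc r" using j by simp
    have g: "(q*t + u) div t = q" "(q*t + u) mod t = u" if "u < t" for u using that by simp_all
    have A: "Suc j mod t = Suc r" "Suc j div t = q" unfolding e using g[OF True] by simp_all
    have B: "j mod t = r" "j div t = q" using j by auto
    from A B show ?thesis by (simp add: W_def)
  next
    case False
    then have r: "r = t - 1" using j by simp
    then have "Suc j = (Suc q) * t" using j assms(1) by simp
    then have "Suc j mod t = 0" "Suc j div t = Suc q" using assms(1) by auto
    moreover have "j mod t = t - 1" "j div t = q" using j(2) unfolding j(1) by simp_all (simp add: r)
    ultimately show ?thesis using assms(2) by (simp add: W_def)
  qed
qed

lemma W_mono:
  assumes "t \<ge> 1" "(t - 1) * n1 < n2" "i \<le> j"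
  shows "W t n1 n2 i \<le> W t n1 n2 j"
  using lift_Suc_mono_le[of "W t n1 n2", OF W_step[OF assms(1,2)] assms(3)] .

lemma W_trade:
  assumes "t \<ge> 1" "n2 < t * n1"
  shows "W t n1 n2 (y + z*t) \<le> y*n1 + z*n2"
proof -
  have "(y + z*t) mod t = y mod t" by simp
  moreover have "(y + z*t) div t = y div t + z" using assms(1) by simp
  moreover have "(y div t) * n2 \<le> (y div t) * t * n1" using assms(2)
    by (metis less_imp_le mult.assoc mult_le_mono2)
  moreover have "y * n1 = (y div t) * t * n1 + (y mod t) * n1"
    by (metis div_mult_mod_eq distrib_right)
  ultimately show ?thesis by (simp add: W_def algebra_simps)
qed

lemma W_eq: "W t (a*m+1) (b*m+t) j = j + m * ((j mod t)*a + (j div t)*b)"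
proof -
  have "W t (a*m+1) (b*m+t) j = (j mod t + (j div t)*t) + m * ((j mod t)*a + (j div t)*b)"
    by (simp add: W_def algebra_simps)
  then show ?thesis by simp
qed

theorem proposition3p9:
  fixes m a b t :: nat
  assumes "m \<ge> 3" and "a \<ge> 1" and "2 \<le> t" and "t \<le> m - 1"
    and "(t - 1) * (a * m + 1) < b * m + t" and "b * m + t < t * (a * m + 1)"
  shows "frobenius (gen_monoid {m, a * m + 1, b * m + t}) =
           int (((m - 1) mod t) * (a * m + 1) + ((m - 1) div t) * (b * m + t)) - int m"
proof -
  define n1 where "n1 = a*m+1"
  define n2 where "n2 = b*m+t"
  define S where "S = gen_monoid {m, n1, n2}"
  define Wf where "Wf = W t n1 n2"
  have t1: "t \<ge> 1" using assms by simp
  have h1: "(t - 1) * n1 < n2" using assms(5) n1_def n2_def by simp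
  have h2: "n2 < t * n1" using assms(6) n1_def n2_def by simp
  have Weq: "\<And>j. Wf j = j + m * ((j mod t)*a + (j div t)*b)"
    unfolding Wf_def n1_def n2_def by (rule W_eq)
  have Wmod: "\<And>j. Wf j mod m = j mod m" using Weq by simp
  have mono: "\<And>i j. i \<le> j \<Longrightarrow> Wf i \<le> Wf j" unfolding Wf_def using W_mono[OF t1 h1] by blast
  have rhs: "((m - 1) mod t) * (a * m + 1) + ((m - 1) div t) * (b * m + t) = Wf (m-1)"
    by (simp add: Wf_def W_def n1_def n2_def)
  have Wt: "Wf t = n2" using t1 by (simp add: Wf_def W_def)
  have "n2 > m"
  proof -
    have "(t - 1) * n1 \<ge> 1 * n1" using assms(3) by (intro mult_le_mono1) simp
    moreover have "n1 > m" using assms(2) n1_def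
      by (metis Suc_eq_plus1 le_imp_less_Suc mult_le_mono1 mult_1)
    ultimately show ?thesis using h1 by linarith
  qed
  moreover have "Wf t \<le> Wf (m-1)" using mono assms(4) by blast
  ultimately have big: "Wf (m-1) > m" using Wt by simp
  have notin: "int (Wf (m-1)) - int m \<notin> int ` S"
  proof
    assume "int (Wf (m-1)) - int m \<in> int ` S"
    then obtain s where s: "s \<in> S" "int s = int (Wf (m-1)) - int m" by (auto simp: image_iff)
    then have s2: "s + m = Wf (m-1)" by simp
    obtain p y z where pyz: "s = p*m + y*n1 + z*n2" using gm_char s(1) S_def by blast
    have "Wf (y + z*t) \<le> y*n1 + z*n2" unfolding Wf_def by (rule W_trade[OF t1 h2])
    moreover have "Wf ((y + z*t) mod m) \<le> Wf (y + z*t)" by (rule mono) simp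
    moreover have "s mod m = (y + z*t) mod m"
    proof -
      have "s = (y*n1 + z*n2) + p*m" using pyz by simp
      then have "s mod m = (y*n1 + z*n2) mod m" by simp
      also have "y*n1 + z*n2 = (y + z*t) + m*(y*a + z*b)" by (simp add: n1_def n2_def algebra_simps)
      finally show ?thesis by simp
    qed
    moreover have "s mod m = m - 1"
    proof -
      have "(s + m) mod m = (m-1) mod m" using s2 Wmod by metis
      then show ?thesis using assms(1) by simp
    qed
    ultimately have "Wf (m-1) \<le> s" using pyz by simp
    then show False using s2 assms(1) by simp
  qed
  have allin: "x \<in> int ` S" if x: "x > int (Wf (m-1)) - int m" for x
  proof -
    have "x \<ge> 0" using x big by simp
    then obtain N where N: "x = int N" by (metis nonneg_eq_int)
    define i where "i = N mod m"
    have im: "i < m" using assms(1) i_def by simp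
    have Wi: "Wf i \<le> Wf (m-1)" using mono im by simp
    have cong: "Wf i mod m = N mod m" using Wmod im i_def by simp
    have "N + m > Wf i" using x N Wi by simp
    have ge: "N \<ge> Wf i"
    proof (rule ccontr)
      assume "\<not> N \<ge> Wf i"
      then have lt: "N < Wf i" by simp
      have "(Wf i - N) mod m = 0" using cong lt by (simp add: mod_eq_dvd_iff_nat dvd_eq_mod_eq_0[symmetric] less_imp_le)
      then have "m dvd (Wf i - N)" by auto
      moreover have "Wf i - N > 0" "Wf i - N < m" using lt \<open>N + m > Wf i\<close> by auto
      ultimately show False using nat_dvd_not_less by blast
    qed
    have "m dvd (N - Wf i)" using cong ge by (metis mod_eq_dvd_iff_nat)
    then obtain k where k: "N - Wf i = m * k" by blast
    have "N = k*m + (i mod t)*n1 + (i div t)*n2" using k ge by (simp add: Wf_def W_def algebra_simps)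
    then have "N \<in> S" unfolding S_def using gm_mem by metis
    then show ?thesis using N by blast
  qed
  have "frobenius S = int (Wf (m-1)) - int m"
    unfolding frobenius_def
  proof (rule Greatest_equality)
    show "int (Wf (m-1)) - int m \<notin> int ` S" by (rule notin)
    fix y assume "y \<notin> int ` S"
    then show "y \<le> int (Wf (m-1)) - int m" using allin by force
  qed
  then show ?thesis using rhs S_def n1_def n2_def by simp
qed

end
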